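(* Let $\ell,k\in\mathbb{Z}_{>0}$, let $D\subseteq\mathbb{R}^\ell$ be convex and $\sigma:\mathbb{R}^\ell\to\mathbb{R}^k$ affine, and set $D_\sigma:=\operatorname{conv}(D\cap\sigma^{-1}(\mathbb{Z}^k))$. If $\operatorname{rdist}(D_\sigma,D)=\delta>0$, then $\operatorname{width}(\sigma(D_\sigma))\leq\frac{1+\delta}{\delta}\operatorname{Flt}(k)$.
   Context: For $B\subseteq\mathbb{R}^k$, $\operatorname{width}(B)=\inf_{v\in\mathbb{Z}^k\setminus\{0\}}\big(\sup_{x\in B}v^\intercal x-\inf_{x\in B}v^\intercal x\big)$. $\operatorname{Flt}(k)$ is the smallest $\lambda\geq0$ such that every convex, closed, full-dimensional $B\subseteq\mathbb{R}^k$ with $B\cap\mathbb{Z}^k=\emptyset$ satisfies $\operatorname{width}(B)\leq\lambda$. For convex $A\subseteq B\subseteq\mathbb{R}^\ell$, $\operatorname{rdist}(A,B)=\sup_{\pi}\frac{\sup_{b\in B}\inf_{a\in A}|\pi(b)-\pi(a)|}{\sup_{a,a'\in A}|\pi(a)-\pi(a')|}$ over linear $\pi:\mathbb{R}^\ell\to\mathbb{R}$ (denominator $\infty$ and $0/0$ read as $0$; $\operatorname{rdist}(\emptyset,\emptyset)=0$, $\operatorname{rdist}(\emptyset,B)=\infty$ for $B\ne\emptyset$). *)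

theory Defs
  imports "HOL-Analysis.Analysis"
begin

definition int_vecs :: "(real ^ 'k) set" where
  "int_vecs = {x. \<forall>i. x $ i \<in> \<int>}"

definition affine_map :: "(real ^ 'l \<Rightarrow> real ^ 'k) \<Rightarrow> bool" where
  "affine_map \<sigma> \<longleftrightarrow> (\<exists>f c. linear f \<and> (\<forall>x. \<sigma> x = f x + c))"

definition lattice_width :: "(real ^ 'k) set \<Rightarrow> ereal" where
  "lattice_width B = (INF v \<in> int_vecs - {0}.
      (SUP x\<in>B. ereal (v \<bullet> x)) - (INF x\<in>B. ereal (v \<bullet> x)))"

definition Flt :: "'k::finite itself \<Rightarrow> ereal" where
  "Flt _ = Inf {lam::ereal. lam \<ge> 0 \<and>
      (\<forall>B::(real^'k) set. convex B \<and> closed B \<and> interior B \<noteq> {} \<and> B \<inter> int_vecs = {}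
          \<longrightarrow> lattice_width B \<le> lam)}"

definition rquot :: "ereal \<Rightarrow> ereal \<Rightarrow> ereal" where
  "rquot n d = (if d = \<infinity> then 0 else if d = 0 then (if n = 0 then 0 else \<infinity>) else n / d)"

definition rdist :: "(real ^ 'l) set \<Rightarrow> (real ^ 'l) set \<Rightarrow> ereal" where
  "rdist A B =
     (if A = {} then (if B = {} then 0 else \<infinity>)
      else (SUP \<pi> \<in> {\<pi>::real^'l \<Rightarrow> real. linear \<pi>}.
              rquot (SUP b\<in>B. INF a\<in>A. ereal \<bar>\<pi> b - \<pi> a\<bar>)
                    (SUP p\<in>A \<times> A. ereal \<bar>\<pi> (fst p) - \<pi> (snd p)\<bar>)))"

end

theory Submission
  imports Defs
begin
lemma width_pairs:
  fixes g :: "'a \<Rightarrow> real"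
  assumes "X \<noteq> {}"
  shows "(SUP x\<in>X. ereal (g x)) - (INF x\<in>X. ereal (g x)) = (SUP p\<in>X\<times>X. ereal (g (fst p) - g (snd p)))"
proof (rule antisym)
  let ?P = "(SUP p\<in>X\<times>X. ereal (g (fst p) - g (snd p)))"
  obtain x0 where x0: "x0 \<in> X" using assms by auto
  have P0: "0 \<le> ?P" using x0 by (intro SUP_upper2[of "(x0,x0)"]) auto
  show "(SUP x\<in>X. ereal (g x)) - (INF x\<in>X. ereal (g x)) \<le> ?P"
  proof (cases ?P)
    case (real r)
    have bd: "g x - g y \<le> r" if "x \<in> X" "y \<in> X" for x y
    proof -
      have "ereal (g x - g y) \<le> ?P" using that by (intro SUP_upper2[of "(x,y)"]) auto
      then show ?thesis using real by simp
    qed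
    have S1: "(SUP x\<in>X. ereal (g x)) \<le> ereal (r + g x0)"
      by (rule SUP_least) (use bd x0 in force)
    have S2: "(SUP x\<in>X. ereal (g x)) \<ge> ereal (g x0)"
      using x0 by (intro SUP_upper2[of x0]) auto
    obtain s0 where s0: "(SUP x\<in>X. ereal (g x)) = ereal s0"
      using S1 S2 by (cases "(SUP x\<in>X. ereal (g x))") auto
    have "ereal (s0 - r) \<le> (INF x\<in>X. ereal (g x))"
    proof (rule INF_greatest)
      fix y assume y: "y \<in> X"
      have "(SUP x\<in>X. ereal (g x)) \<le> ereal (r + g y)"
        by (rule SUP_least) (use bd y in force)
      then show "ereal (s0 - r) \<le> ereal (g y)" using s0 by simp
    qed
    then have "ereal s0 - (INF x\<in>X. ereal (g x)) \<le> ereal s0 - ereal (s0 - r)"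
      by (intro ereal_minus_mono) auto
    then show ?thesis using s0 real by simp
  qed (use P0 in auto)
  show "?P \<le> (SUP x\<in>X. ereal (g x)) - (INF x\<in>X. ereal (g x))"
  proof (rule SUP_least)
    fix p assume p: "p \<in> X \<times> X"
    have "ereal (g (fst p)) - ereal (g (snd p)) \<le> (SUP x\<in>X. ereal (g x)) - (INF x\<in>X. ereal (g x))"
      using p by (intro ereal_minus_mono SUP_upper INF_lower) auto
    then show "ereal (g (fst p) - g (snd p)) \<le> (SUP x\<in>X. ereal (g x)) - (INF x\<in>X. ereal (g x))" by simp
  qed
qed

lemma width_pairs_abs:
  fixes g :: "'a \<Rightarrow> real"
  assumes "X \<noteq> {}"
  shows "(SUP x\<in>X. ereal (g x)) - (INF x\<in>X. ereal (g x)) = (SUP p\<in>X\<times>X. ereal \<bar>g (fst p) - g (snd p)\<bar>)"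
proof -
  have "(SUP p\<in>X\<times>X. ereal (g (fst p) - g (snd p))) = (SUP p\<in>X\<times>X. ereal \<bar>g (fst p) - g (snd p)\<bar>)"
  proof (rule antisym)
    show "(SUP p\<in>X\<times>X. ereal (g (fst p) - g (snd p))) \<le> (SUP p\<in>X\<times>X. ereal \<bar>g (fst p) - g (snd p)\<bar>)"
      by (rule SUP_mono) force
    show "(SUP p\<in>X\<times>X. ereal \<bar>g (fst p) - g (snd p)\<bar>) \<le> (SUP p\<in>X\<times>X. ereal (g (fst p) - g (snd p)))"
    proof (rule SUP_mono)
      fix p assume p: "p \<in> X \<times> X"
      show "\<exists>q\<in>X \<times> X. ereal \<bar>g (fst p) - g (snd p)\<bar> \<le> ereal (g (fst q) - g (snd q))"
      proof (cases "g (fst p) - g (snd p) \<ge> 0")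
        case True then show ?thesis using p by (intro bexI[of _ p]) auto
      next
        case False then show ?thesis using p by (intro bexI[of _ "(snd p, fst p)"]) auto
      qed
    qed
  qed
  then show ?thesis using width_pairs[OF assms] by simp
qed

lemma lw_pairs:
  fixes X :: "(real^'k) set"
  assumes "X \<noteq> {}"
  shows "lattice_width X = (INF v\<in>int_vecs - {0}. SUP p\<in>X\<times>X. ereal \<bar>v \<bullet> fst p - v \<bullet> snd p\<bar>)"
  unfolding lattice_width_def using width_pairs_abs[OF assms] by simp

lemma lw_mono:
  fixes X :: "(real^'k) set"
  assumes "X \<noteq> {}" "X \<subseteq> Y"
  shows "lattice_width X \<le> lattice_width Y"
proof -
  have Y: "Y \<noteq> {}" using assms by auto
  show ?thesis unfolding lw_pairs[OF assms(1)] lw_pairs[OF Y]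
    by (rule INF_mono, rule_tac x=m in bexI, rule SUP_subset_mono) (use assms in auto)
qed

lemma lw_hom:
  fixes X :: "(real^'k) set"
  assumes "X \<noteq> {}" "t \<ge> 0"
  shows "ereal t * lattice_width X \<le> lattice_width ((\<lambda>z. y + t *\<^sub>R (z - y)) ` X)"
proof -
  let ?h = "(\<lambda>z. y + t *\<^sub>R (z - y))"
  have Y: "?h ` X \<noteq> {}" using assms by auto
  have eq: "(SUP p\<in>?h ` X \<times> ?h ` X. ereal \<bar>v \<bullet> fst p - v \<bullet> snd p\<bar>)
      = ereal t * (SUP p\<in>X\<times>X. ereal \<bar>v \<bullet> fst p - v \<bullet> snd p\<bar>)" for v :: "real^'k"
  proof -
    have im: "?h ` X \<times> ?h ` X = (\<lambda>p. (?h (fst p), ?h (snd p))) ` (X \<times> X)" by force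
    have "(SUP p\<in>?h ` X \<times> ?h ` X. ereal \<bar>v \<bullet> fst p - v \<bullet> snd p\<bar>)
        = (SUP p\<in>X\<times>X. ereal t * ereal \<bar>v \<bullet> fst p - v \<bullet> snd p\<bar>)"
      unfolding im image_image
      by (intro SUP_cong refl) (use assms in \<open>auto simp: inner_simps abs_mult simp flip: right_diff_distrib\<close>)
    also have "\<dots> = ereal t * (SUP p\<in>X\<times>X. ereal \<bar>v \<bullet> fst p - v \<bullet> snd p\<bar>)"
      by (rule SUP_ereal_mult_left) (use assms in auto)
    finally show ?thesis .
  qed
  show ?thesis unfolding lw_pairs[OF assms(1)] lw_pairs[OF Y] eq
    by (intro INF_greatest ereal_mult_left_mono INF_lower) (use assms in auto)
qed

lemma hom_eq: fixes X :: "'a::real_vector set" shows "(\<lambda>z. y + t *\<^sub>R (z - y)) ` X = (+) (y - t *\<^sub>R y) ` ((*\<^sub>R) t ` X)"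
proof -
  have "\<And>z. y + t *\<^sub>R (z - y) = (y - t *\<^sub>R y) + t *\<^sub>R z" by (simp add: algebra_simps)
  then show ?thesis by (simp only: image_image)
qed

lemma hom_convex: fixes X :: "'a::real_vector set" shows "convex X \<Longrightarrow> convex ((\<lambda>z. y + t *\<^sub>R (z - y)) ` X)"
  unfolding hom_eq by (intro convex_translation convex_scaling)

lemma hom_closed:
  fixes X :: "'a::real_normed_vector set"
  shows "closed X \<Longrightarrow> closed ((\<lambda>z. y + t *\<^sub>R (z - y)) ` X)"
  unfolding hom_eq by (intro closed_translation closed_scaling)

lemma hom_interior:
  fixes X :: "'a::real_normed_vector set"
  assumes "interior X \<noteq> {}" "t > 0"
  shows "interior ((\<lambda>z. y + t *\<^sub>R (z - y)) ` X) \<noteq> {}"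
proof -
  obtain p where "p \<in> interior X" using assms by auto
  then obtain r where r: "r > 0" "ball p r \<subseteq> X" using mem_interior by blast
  have "ball (y + t *\<^sub>R (p - y)) (t * r) \<subseteq> (\<lambda>z. y + t *\<^sub>R (z - y)) ` X"
  proof
    fix z assume z: "z \<in> ball (y + t *\<^sub>R (p - y)) (t * r)"
    let ?x = "y + (1/t) *\<^sub>R (z - y)"
    have e: "p - ?x = (1/t) *\<^sub>R ((y + t *\<^sub>R (p - y)) - z)"
      using assms(2) by (simp add: algebra_simps)
    have "dist p ?x = (1/t) * dist (y + t *\<^sub>R (p - y)) z"
      unfolding dist_norm e using assms(2) by simp
    also have "\<dots> < (1/t) * (t * r)" using z assms(2) by (intro mult_strict_left_mono) auto
    also have "\<dots> = r" using assms(2) by simp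
    finally have "?x \<in> X" using r by auto
    moreover have "z = y + t *\<^sub>R (?x - y)" using assms(2) by simp
    ultimately show "z \<in> (\<lambda>z. y + t *\<^sub>R (z - y)) ` X" by blast
  qed
  then have "ball (y + t *\<^sub>R (p - y)) (t * r) \<subseteq> interior ((\<lambda>z. y + t *\<^sub>R (z - y)) ` X)"
    by (simp add: interior_maximal)
  then show ?thesis using r assms(2) by (metis centre_in_ball empty_iff mult_pos_pos subset_empty)
qed

definition valid_lam :: "'k::finite itself \<Rightarrow> ereal \<Rightarrow> bool" where
  "valid_lam _ lam \<longleftrightarrow> lam \<ge> 0 \<and>
      (\<forall>B::(real^'k) set. convex B \<and> closed B \<and> interior B \<noteq> {} \<and> B \<inter> int_vecs = {}
          \<longrightarrow> lattice_width B \<le> lam)"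

lemma lw_nonneg:
  fixes X :: "(real^'k) set"
  assumes "X \<noteq> {}"
  shows "lattice_width X \<ge> 0"
  unfolding lw_pairs[OF assms]
proof (rule INF_greatest)
  fix v :: "real^'k"
  obtain x where "x \<in> X" using assms by auto
  then show "0 \<le> (SUP p\<in>X \<times> X. ereal \<bar>v \<bullet> fst p - v \<bullet> snd p\<bar>)"
    by (intro SUP_upper2[of "(x,x)"]) auto
qed

lemma shrink:
  fixes B :: "(real^'k) set"
  assumes "valid_lam TYPE('k) lam" "convex B" "interior B \<noteq> {}" "B \<inter> int_vecs = {}"
  shows "lattice_width B \<le> lam"
proof -
  obtain p where p: "p \<in> interior B" using assms by auto
  have Bne: "B \<noteq> {}" using p interior_subset by blast
  have key: "ereal t * lattice_width B \<le> lam" if t: "0 < t" "t < 1" for t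
  proof -
    let ?C = "(\<lambda>z. p + t *\<^sub>R (z - p)) ` closure B"
    have sub: "?C \<subseteq> B"
    proof
      fix x assume "x \<in> ?C"
      then obtain z where z: "z \<in> closure B" "x = p + t *\<^sub>R (z - p)" by auto
      show "x \<in> B"
      proof (cases "z = p")
        case True then show ?thesis using z p interior_subset by auto
      next
        case False
        have "x \<in> open_segment p z" unfolding in_segment using False t z
          by (intro conjI exI[of _ t]) (auto simp: algebra_simps)
        then show ?thesis using in_interior_closure_convex_segment[OF assms(2) p z(1)] interior_subset by blast
      qed
    qed
    have "convex ?C" by (intro hom_convex convex_closure assms)
    moreover have "closed ?C" by (intro hom_closed) simp
    moreover have "interior ?C \<noteq> {}"
      by (intro hom_interior t) (metis assms(3) interior_mono closure_subset subset_empty)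
    moreover have "?C \<inter> int_vecs = {}" using sub assms(4) by auto
    ultimately have "lattice_width ?C \<le> lam" using assms(1) unfolding valid_lam_def by blast
    moreover have "ereal t * lattice_width B \<le> lattice_width ((\<lambda>z. p + t *\<^sub>R (z - p)) ` B)"
      by (rule lw_hom) (use Bne t in auto)
    moreover have "lattice_width ((\<lambda>z. p + t *\<^sub>R (z - p)) ` B) \<le> lattice_width ?C"
      by (intro lw_mono image_mono closure_subset) (use Bne in auto)
    ultimately show ?thesis by order
  qed
  have l0: "lam \<ge> 0" using assms(1) unfolding valid_lam_def by auto
  have w0: "lattice_width B \<ge> 0" by (rule lw_nonneg[OF Bne])
  show ?thesis
  proof (cases lam)
    case (real l)
    show ?thesis
    proof (cases "lattice_width B")
      case (real w)
      have "w \<le> l"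
      proof (rule field_le_mult_one_interval)
        fix z :: real assume "0 < z" "z < 1"
        then show "z * w \<le> l" using key[of z] real \<open>lam = ereal l\<close> by simp
      qed
      then show ?thesis using real \<open>lam = ereal l\<close> by simp
    next
      case PInf
      then have "ereal (1/2) * lattice_width B = \<infinity>" by simp
      then show ?thesis using key[of "1/2"] real by simp
    next
      case MInf then show ?thesis using w0 by simp
    qed
  qed (use l0 in auto)
qed

lemma Flt_bound:
  fixes B :: "(real^'k) set"
  assumes "convex B" "interior B \<noteq> {}" "B \<inter> int_vecs = {}"
  shows "lattice_width B \<le> Flt TYPE('k)"
  unfolding Flt_def
  by (rule Inf_greatest) (use shrink[OF _ assms] in \<open>auto simp: valid_lam_def\<close>)

lemma Flt_nonneg: "Flt TYPE('k::finite) \<ge> 0"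
  unfolding Flt_def by (rule Inf_greatest) auto

lemma det_Ints:
  fixes A :: "real^'n^'n"
  assumes "\<And>i j. A $ i $ j \<in> \<int>"
  shows "det A \<in> \<int>"
  unfolding det_def using assms
  by (intro Ints_sum Ints_mult Ints_prod Ints_of_int) auto

lemma Basis_int: "(Basis :: (real^'k) set) \<subseteq> int_vecs"
  by (auto simp: Basis_vec_def int_vecs_def axis_def)

lemma int_normal:
  fixes L :: "(real^'k) set"
  assumes LZ: "L \<subseteq> int_vecs" and aL: "a \<in> L" and aff: "affine hull L \<noteq> UNIV"
  shows "\<exists>v\<in>int_vecs - {0}. \<forall>x\<in>L. v \<bullet> x = v \<bullet> a"
proof -
  define T where "T = (\<lambda>x. x - a) ` L"
  have TZ: "T \<subseteq> int_vecs"
  proof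
    fix y assume "y \<in> T"
    then obtain x where x: "x \<in> L" "y = x - a" unfolding T_def by auto
    have "x \<in> int_vecs" "a \<in> int_vecs" using x LZ aL by auto
    then show "y \<in> int_vecs" using x unfolding int_vecs_def by (auto intro!: Ints_diff)
  qed
  have spT: "span T \<noteq> UNIV"
  proof
    assume U: "span T = UNIV"
    let ?S = "(\<lambda>x. -a+x) ` (L-{a})"
    have "T \<subseteq> insert 0 ?S" unfolding T_def by auto
    then have "span T \<subseteq> span ?S" by (metis span_insert_0 span_mono)
    then have "span ?S = UNIV" using U by auto
    then have e1: "affine hull L = (\<lambda>x. a + x) ` UNIV" by (simp add: affine_hull_span2[OF aL])
    have "y \<in> (\<lambda>x. a + x) ` UNIV" for y
    proof -
      have "y = a + (y - a)" by simp
      then show ?thesis by blast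
    qed
    then have "affine hull L = UNIV" using e1 by auto
    then show False using aff by simp
  qed
  obtain T0 where T0: "T0 \<subseteq> T" "independent T0" "T \<subseteq> span T0"
    using maximal_independent_subset by blast
  obtain B where B: "T0 \<subseteq> B" "B \<subseteq> T0 \<union> Basis" "independent B" "T0 \<union> Basis \<subseteq> span B"
    using maximal_independent_subset_extend[of T0 "T0 \<union> Basis"] T0 by blast
  have spB: "span B = UNIV"
  proof -
    have "Basis \<subseteq> span B" using B(4) by auto
    then have "span Basis \<subseteq> span B" by (metis span_mono span_span)
    then show ?thesis by auto
  qed
  have finB: "finite B" using B(3) finiteI_independent by blast
  have cardB: "card B = CARD('k)"
    using basis_card_eq_dim[of B UNIV] B(3) spB by simp
  have BZ: "B \<subseteq> int_vecs" using B(2) T0(1) TZ Basis_int by blast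
  obtain e where e: "e \<in> B" "e \<notin> T0"
  proof -
    have "B \<noteq> T0"
    proof
      assume "B = T0"
      then have "span T0 = UNIV" using spB by simp
      moreover have "span T0 \<subseteq> span T" using T0(1) span_mono by blast
      ultimately show False using spT by auto
    qed
    then show ?thesis using that B(1) by blast
  qed
  obtain h where h: "bij_betw h (UNIV :: 'k set) B"
    using finite_same_card_bij[of "UNIV :: 'k set" B] finB cardB by auto
  obtain j0 where j0: "h j0 = e" using h e(1) unfolding bij_betw_def by auto
  define F where "F x = det ((\<chi> i. if i = j0 then x else h i) :: real^'k^'k)" for x
  have Fadd: "F (x + y) = F x + F y" for x y
    unfolding F_def using det_row_add[of j0 "\<lambda>_. x" "\<lambda>_. y" h] by simp
  have Fmul: "F (c *\<^sub>R x) = c * F x" for c x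
    unfolding F_def using det_row_mul[of j0 c "\<lambda>_. x" h] unfolding scalar_mult_eq_scaleR by simp
  have linF: "linear F" by (rule linearI) (auto simp: Fadd Fmul)
  have Fh: "F (h i) = 0" if "i \<noteq> j0" for i
    unfolding F_def by (rule det_identical_rows[OF that]) (auto simp: row_def vec_eq_iff)
  have Fe: "F e \<noteq> 0"
  proof -
    have eqM: "((\<chi> i. if i = j0 then e else h i) :: real^'k^'k) = (\<chi> i. h i)"
      using j0 by (auto simp: vec_eq_iff)
    have "invertible ((\<chi> i. h i) :: real^'k^'k)"
      unfolding invertible_right_inverse matrix_right_invertible_independent_rows
    proof (intro allI impI)
      fix c :: "'k \<Rightarrow> real" and i
      assume c: "(\<Sum>i\<in>UNIV. c i *s row i ((\<chi> i. h i) :: real^'k^'k)) = 0"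
      have "(\<Sum>i\<in>UNIV. c i *\<^sub>R h i) = 0" using c by (simp add: row_def scalar_mult_eq_scaleR)
      then have "(\<Sum>u\<in>B. c (inv_into UNIV h u) *\<^sub>R u) = 0"
        using sum.reindex_bij_betw[OF h, of "\<lambda>u. c (inv_into UNIV h u) *\<^sub>R u"] h
        by (simp add: bij_betw_inv_into_left)
      moreover have "\<forall>c. (\<Sum>v\<in>B. c v *\<^sub>R v) = 0 \<longrightarrow> (\<forall>v\<in>B. c v = 0)"
        using B(3) unfolding independent_explicit by blast
      then have "(\<Sum>v\<in>B. c (inv_into UNIV h v) *\<^sub>R v) = 0 \<longrightarrow> (\<forall>v\<in>B. c (inv_into UNIV h v) = 0)"
        by (rule spec)
      ultimately have "\<forall>u\<in>B. c (inv_into UNIV h u) = 0" by blast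
      moreover have "h i \<in> B" using h by (auto simp: bij_betw_def)
      ultimately show "c i = 0" using h by (metis bij_betw_inv_into_left UNIV_I)
    qed
    then show ?thesis unfolding F_def eqM by (simp add: invertible_det_nz)
  qed
  define v where "v = (\<chi> m. F (axis m 1))"
  have vx: "v \<bullet> x = F x" for x
  proof -
    have "F x = F (\<Sum>m\<in>UNIV. x $ m *\<^sub>R axis m 1)"
      using basis_expansion[of x] by (simp add: scalar_mult_eq_scaleR)
    also have "\<dots> = (\<Sum>m\<in>UNIV. x $ m * F (axis m 1))"
      by (simp add: linear_sum[OF linF] linear_scale[OF linF] o_def)
    also have "\<dots> = v \<bullet> x" by (simp add: v_def inner_vec_def mult.commute)
    finally show ?thesis by simp
  qed
  have vZ: "v \<in> int_vecs"
    unfolding int_vecs_def v_def F_def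
  proof (intro CollectI allI)
    fix m
    show "(\<chi> m. det ((\<chi> i. if i = j0 then axis m 1 else h i) :: real^'k^'k)) $ m \<in> \<int>"
    proof (simp, rule det_Ints)
      fix i j
      have "h i \<in> int_vecs" using h BZ by (auto simp: bij_betw_def)
      then show "(\<chi> i. if i = j0 then axis m 1 else h i) $ i $ j \<in> \<int>"
        by (auto simp: int_vecs_def axis_def)
    qed
  qed
  have v0: "v \<noteq> 0" using Fe vx[of e] by auto
  have F0: "F u = 0" if "u \<in> span (B - {e})" for u
  proof -
    have "\<forall>u\<in>B - {e}. F u = 0"
    proof
      fix u assume u: "u \<in> B - {e}"
      then obtain i where i: "h i = u" using h by (auto simp: bij_betw_def)
      then have "i \<noteq> j0" using j0 u by auto
      then show "F u = 0" using Fh i by auto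
    qed
    then show ?thesis using linear_eq_0_on_span[OF linF] that by blast
  qed
  have "\<forall>x\<in>L. v \<bullet> x = v \<bullet> a"
  proof
    fix x assume x: "x \<in> L"
    have "x - a \<in> T" using x unfolding T_def by auto
    then have "x - a \<in> span T0" using T0 by auto
    moreover have "span T0 \<subseteq> span (B - {e})" using B(1) e(2) by (intro span_mono) auto
    ultimately have "F (x - a) = 0" using F0 by auto
    then show "v \<bullet> x = v \<bullet> a" using vx[of "x - a"] by (simp add: inner_diff_right)
  qed
  then show ?thesis using vZ v0 by blast
qed

theorem mainTheorem10:
  fixes D :: "(real ^ 'l) set" and \<sigma> :: "real ^ 'l \<Rightarrow> real ^ 'k" and \<delta> :: real
  assumes "convex D"
    and "affine_map \<sigma>"
    and "rdist (convex hull (D \<inter> \<sigma> -` int_vecs)) D = ereal \<delta>"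
    and "\<delta> > 0"
  shows "lattice_width (\<sigma> ` (convex hull (D \<inter> \<sigma> -` int_vecs)))
           \<le> ereal ((1 + \<delta>) / \<delta>) * Flt TYPE('k)"
proof -
  obtain f c where f: "linear f" and sig: "\<And>x. \<sigma> x = f x + c"
    using assms(2) unfolding affine_map_def by blast
  define S where "S = D \<inter> \<sigma> -` int_vecs"
  define A where "A = convex hull S"
  define A' where "A' = \<sigma> ` A"
  have Ane: "A \<noteq> {}"
  proof
    assume "A = {}"
    then have "rdist A D = 0 \<or> rdist A D = \<infinity>" unfolding rdist_def by auto
    then show False using assms(3,4) unfolding A_def S_def by auto
  qed
  have SD: "S \<subseteq> D" unfolding S_def by auto
  have AD: "A \<subseteq> D" unfolding A_def using SD assms(1) by (rule hull_minimal)
  have SA: "S \<subseteq> A" unfolding A_def by (rule hull_subset)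
  have Sne: "S \<noteq> {}" using Ane unfolding A_def by auto
  have im: "\<sigma> ` X = (\<lambda>x. c + x) ` (f ` X)" for X
    by (auto simp: sig image_image add.commute)
  have A'eq: "A' = convex hull (\<sigma> ` S)"
    unfolding A'_def A_def im convex_hull_linear_image[OF f] convex_hull_translation ..
  have A'conv: "convex A'" unfolding A'eq by simp
  have A'ne: "A' \<noteq> {}" using Ane unfolding A'_def by auto
  have Fl0: "Flt TYPE('k) \<ge> 0" by (rule Flt_nonneg)
  have RHS0: "0 \<le> ereal ((1 + \<delta>) / \<delta>) * Flt TYPE('k)"
    using Fl0 assms(4) by (cases "Flt TYPE('k)") auto
  have sigaff: "\<sigma> (b + s *\<^sub>R (a - b)) = \<sigma> b + s *\<^sub>R (\<sigma> a - \<sigma> b)" for a b s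
    by (simp add: sig linear_add[OF f] linear_scale[OF f] linear_diff[OF f] algebra_simps)
  show ?thesis
  proof (cases "interior A' = {}")
    case True
    define L where "L = \<sigma> ` S"
    have LZ: "L \<subseteq> int_vecs" unfolding L_def S_def by auto
    obtain a where aL: "a \<in> L" using Sne unfolding L_def by auto
    have aff: "affine hull L \<noteq> UNIV"
    proof
      assume U: "affine hull L = UNIV"
      have "rel_interior (convex hull L) \<noteq> {}"
        using aL by (auto simp: rel_interior_eq_empty)
      moreover have "rel_interior (convex hull L) = interior (convex hull L)"
        by (rule rel_interior_interior) (simp add: U)
      ultimately show False using True unfolding A'eq L_def by simp
    qed
    obtain v where v: "v \<in> int_vecs - {0}" "\<forall>x\<in>L. v \<bullet> x = v \<bullet> a"
      using int_normal[OF LZ aL aff] by blast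
    have "A' \<subseteq> {x. v \<bullet> x = v \<bullet> a}"
      unfolding A'eq L_def[symmetric] by (rule hull_minimal) (use v(2) convex_hyperplane in auto)
    then have "(SUP x\<in>A'. ereal (v \<bullet> x)) = ereal (v \<bullet> a)" "(INF x\<in>A'. ereal (v \<bullet> x)) = ereal (v \<bullet> a)"
      using A'ne by (auto intro!: SUP_eq_const INF_eq_const)
    then have "lattice_width A' \<le> 0"
      unfolding lattice_width_def using INF_lower[OF v(1), of "\<lambda>v. (SUP x\<in>A'. ereal (v \<bullet> x)) - (INF x\<in>A'. ereal (v \<bullet> x))"]
      by simp
    then show ?thesis using RHS0 unfolding A'_def A_def S_def by order
  next
    case False
    define W where "W = lattice_width A'"
    have key: "ereal s * W \<le> Flt TYPE('k)" if s: "0 < s" "s < \<delta> / (1 + \<delta>)" for s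
    proof -
      have "\<delta> / (1 + \<delta>) < 1" using assms(4) by simp
      then have s1: "s < 1" using s by linarith
      have sd: "s / (1 - s) < \<delta>" using s assms(4) s1 by (simp add: field_simps)
      define r where "r = s / (1 - s)"
      define d where "d = (r + \<delta>) / 2"
      have "0 < r" using s s1 unfolding r_def by simp
      then have d: "s / (1 - s) < d" "d < \<delta>" "0 < d" using sd unfolding d_def r_def[symmetric] by auto
      have ds: "s < d * (1 - s)" using d(1) s1 by (simp add: field_simps)
      define N where "N \<pi> = (SUP b\<in>D. INF a\<in>A. ereal \<bar>\<pi> b - \<pi> a\<bar>)" for \<pi> :: "real^'l \<Rightarrow> real"
      define P where "P \<pi> = (SUP p\<in>A \<times> A. ereal \<bar>\<pi> (fst p) - \<pi> (snd p)\<bar>)" for \<pi> :: "real^'l \<Rightarrow> real"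
      have rd: "(SUP \<pi> \<in> {\<pi>::real^'l \<Rightarrow> real. linear \<pi>}. rquot (N \<pi>) (P \<pi>)) = ereal \<delta>"
        using assms(3) Ane unfolding rdist_def N_def P_def A_def S_def by simp
      then have "ereal d < (SUP \<pi> \<in> {\<pi>::real^'l \<Rightarrow> real. linear \<pi>}. rquot (N \<pi>) (P \<pi>))" using d by simp
      then obtain \<pi> where lin: "linear \<pi>" and gt: "ereal d < rquot (N \<pi>) (P \<pi>)"
        unfolding less_SUP_iff by blast
      have le: "rquot (N \<pi>) (P \<pi>) \<le> ereal \<delta>" using lin rd[symmetric] by (auto intro: SUP_upper)
      obtain a0 where a0: "a0 \<in> A" using Ane by auto
      have P0: "P \<pi> \<ge> 0" unfolding P_def using a0 by (intro SUP_upper2[of "(a0,a0)"]) auto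
      obtain w where w: "P \<pi> = ereal w" "w > 0" and Nw: "ereal (d * w) < N \<pi>"
      proof (cases "P \<pi>")
        case (real w)
        show ?thesis
        proof (cases "w = 0")
          case True
          then show ?thesis using gt le d real unfolding rquot_def by (auto split: if_splits)
        next
          case False
          then have wp: "w > 0" using P0 real by simp
          have q: "rquot (N \<pi>) (P \<pi>) = N \<pi> / ereal w" using real False unfolding rquot_def by simp
          have "ereal (d * w) < N \<pi>"
          proof (cases "N \<pi>")
            case (real n)
            then have "d < n / w" using gt q wp by simp
            then have "d * w < n" using wp by (simp add: field_simps)
            then show ?thesis using real by simp
          next
            case MInf then show ?thesis using gt q wp by simp
          qed simp
          then show ?thesis using that[OF real wp] by simp
        qed
      next
        case PInf then show ?thesis using gt d unfolding rquot_def by simp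
      next
        case MInf then show ?thesis using P0 by simp
      qed
      obtain b where bD: "b \<in> D" and bgt: "ereal (d * w) < (INF a\<in>A. ereal \<bar>\<pi> b - \<pi> a\<bar>)"
        using Nw unfolding N_def less_SUP_iff by blast
      have far: "d * w < \<bar>\<pi> b - \<pi> a\<bar>" if "a \<in> A" for a
      proof -
        have "(INF a\<in>A. ereal \<bar>\<pi> b - \<pi> a\<bar>) \<le> ereal \<bar>\<pi> b - \<pi> a\<bar>" using that by (rule INF_lower)
        then have "ereal (d * w) < ereal \<bar>\<pi> b - \<pi> a\<bar>" using bgt by order
        then show ?thesis by simp
      qed
      have wid: "\<bar>\<pi> a - \<pi> a'\<bar> \<le> w" if "a \<in> A" "a' \<in> A" for a a'
      proof -
        have "ereal \<bar>\<pi> a - \<pi> a'\<bar> \<le> P \<pi>" unfolding P_def using that by (intro SUP_upper2[of "(a,a')"]) auto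
        then show ?thesis using w by simp
      qed
      define y where "y = \<sigma> b"
      define B0 where "B0 = (\<lambda>z. y + s *\<^sub>R (z - y)) ` A'"
      have "convex B0" unfolding B0_def by (rule hom_convex[OF A'conv])
      moreover have "interior B0 \<noteq> {}" unfolding B0_def by (rule hom_interior) (use False s in auto)
      moreover have "B0 \<inter> int_vecs = {}"
      proof (rule ccontr)
        assume "B0 \<inter> int_vecs \<noteq> {}"
        then obtain a where aA: "a \<in> A" and zZ: "y + s *\<^sub>R (\<sigma> a - y) \<in> int_vecs"
          unfolding B0_def A'_def by auto
        define x where "x = b + s *\<^sub>R (a - b)"
        have sx: "\<sigma> x = y + s *\<^sub>R (\<sigma> a - y)" unfolding x_def y_def by (rule sigaff)
        have "x = (1 - s) *\<^sub>R b + s *\<^sub>R a" unfolding x_def by (simp add: algebra_simps)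
        then have "x \<in> D" using assms(1) bD AD aA s s1 unfolding convex_def by auto
        then have xA: "x \<in> A" using sx zZ SA unfolding S_def by auto
        have px: "\<pi> x = \<pi> b + s * (\<pi> a - \<pi> b)" unfolding x_def
          by (simp add: linear_add[OF lin] linear_scale[OF lin] linear_diff[OF lin])
        define u where "u = \<bar>\<pi> b - \<pi> x\<bar>"
        have u1: "d * w < u" unfolding u_def using far[OF xA] .
        have u2: "u = s * \<bar>\<pi> b - \<pi> a\<bar>" unfolding u_def px using s by (simp add: abs_mult)
        have "\<bar>\<pi> b - \<pi> a\<bar> \<le> u + w" unfolding u_def using wid[OF xA aA] by linarith
        then have "u \<le> s * (u + w)" using u2 s by (simp add: mult_left_mono)
        then have u3: "u * (1 - s) \<le> s * w" by (simp add: algebra_simps)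
        have "d * w * (1 - s) < u * (1 - s)" using u1 s1 by (intro mult_strict_right_mono) auto
        moreover have "s * w < d * (1 - s) * w" using ds w(2) by (intro mult_strict_right_mono) auto
        ultimately show False using u3 by (simp add: algebra_simps)
      qed
      ultimately have "lattice_width B0 \<le> Flt TYPE('k)" by (rule Flt_bound)
      moreover have "ereal s * W \<le> lattice_width B0" unfolding W_def B0_def
        by (rule lw_hom) (use A'ne s in auto)
      ultimately show ?thesis by order
    qed
    have W0: "W \<ge> 0" unfolding W_def by (rule lw_nonneg[OF A'ne])
    define q where "q = \<delta> / (1 + \<delta>)"
    have q: "0 < q" "q < 1" unfolding q_def using assms(4) by auto
    have "W \<le> ereal ((1 + \<delta>) / \<delta>) * Flt TYPE('k)"
    proof (cases "Flt TYPE('k)")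
      case (real F)
      show ?thesis
      proof (cases W)
        case (real w)
        have "q * w \<le> F"
        proof (rule field_le_mult_one_interval)
          fix z :: real assume z: "0 < z" "z < 1"
          have "0 < z * q" "z * q < q" using z q by auto
          then have "ereal (z * q) * W \<le> Flt TYPE('k)" using key q_def by auto
          then show "z * (q * w) \<le> F" using real \<open>Flt TYPE('k) = ereal F\<close> by (simp add: mult.assoc)
        qed
        then have "((1 + \<delta>) / \<delta>) * (q * w) \<le> ((1 + \<delta>) / \<delta>) * F"
          using assms(4) by (intro mult_left_mono) auto
        moreover have "((1 + \<delta>) / \<delta>) * (q * w) = w"
        proof -
          have "1 + \<delta> \<noteq> 0" "\<delta> \<noteq> 0" using assms(4) by auto
          then have "((1 + \<delta>) / \<delta>) * q = 1" unfolding q_def by simp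
          then show ?thesis by (metis mult.assoc mult_1)
        qed
        ultimately show ?thesis using real \<open>Flt TYPE('k) = ereal F\<close> by simp
      next
        case PInf
        have "0 < q/2" "q/2 < \<delta> / (1 + \<delta>)" using q by (auto simp: q_def[symmetric])
        then have "ereal (q/2) * W \<le> Flt TYPE('k)" by (rule key)
        then show ?thesis using PInf real q by simp
      next
        case MInf then show ?thesis using W0 by simp
      qed
    next
      case PInf then show ?thesis using assms(4) by simp
    next
      case MInf then show ?thesis using Fl0 by simp
    qed
    then show ?thesis unfolding W_def A'_def A_def S_def .
  qed
qed
end
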